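(* There exists a constant $S_{\min}$ such that for all positive integers $m$ and all $p\in(0,1]$ with $mp\ge S_{\min}$, if $X\sim\mathrm{Bin}(m,p)$, then \[E[\ln(1+X)]\ge \ln(1+mp)-\frac{11}{12}\cdot\frac{1-p}{mp}.\]
   Context: $\mathrm{Bin}(m,p)$ denotes the binomial distribution with $m$ trials and success probability $p$. *)

theory Defs
  imports "HOL-Probability.Probability"
begin

end

theory Submission
  imports Defs
begin

lemma ln_lb:
  fixes t :: real assumes t: "t > 0"
  shows "(t - 1/t)/2 - (t-1)^2/8 \<le> ln t"
proof -
  define f where "f = (\<lambda>x::real. ln x - (x - 1/x)/2 + (x-1)^2/8)"
  have d: "(f has_real_derivative ((x-1)*((x-1)^2+1)/(4*x^2))) (at x)" if "x > 0" for x
  proof -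
    have "(f has_real_derivative (1/x - (1 + 1/x^2)/2 + 2*(x-1)/8)) (at x)"
      unfolding f_def using that
      by (auto intro!: derivative_eq_intros simp: power2_eq_square field_simps)
    moreover have "1/x - (1 + 1/x^2)/2 + 2*(x-1)/8 = (x-1)*((x-1)^2+1)/(4*x^2)"
      using that by (simp add: field_simps power2_eq_square)
    ultimately show ?thesis by simp
  qed
  have f1: "f 1 = 0" by (simp add: f_def)
  have "f 1 \<le> f t"
  proof (cases "t \<ge> 1")
    case True
    show ?thesis
    proof (rule DERIV_nonneg_imp_nondecreasing[OF True])
      fix x assume "1 \<le> x" "x \<le> t"
      then show "\<exists>y. (f has_real_derivative y) (at x) \<and> 0 \<le> y"
        by (intro exI[of _ "(x-1)*((x-1)^2+1)/(4*x^2)"]) (auto intro!: d)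
    qed
  next
    case False
    have "f 1 \<le> f t"
    proof (rule DERIV_nonpos_imp_nonincreasing[of t 1 f])
      show "t \<le> 1" using False by simp
      fix x assume "t \<le> x" "x \<le> 1"
      then show "\<exists>y. (f has_real_derivative y) (at x) \<and> y \<le> 0"
        using t by (intro exI[of _ "(x-1)*((x-1)^2+1)/(4*x^2)"])
          (auto intro!: d simp: mult_nonpos_nonneg divide_nonpos_pos)
    qed
    then show ?thesis .
  qed
  then show ?thesis using f1 by (simp add: f_def)
qed

lemma S0: "(\<Sum>k\<le>m. real (m choose k) * p^k * (1-p)^(m-k)) = (1::real)"
  using binomial_ring[of p "1-p" m] by simp

lemma S1: "(\<Sum>k\<le>m. real k * (real (m choose k) * p^k * (1-p)^(m-k))) = real m * (p::real)"
proof (cases m)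
  case 0 then show ?thesis by simp
next
  case (Suc n)
  have "(\<Sum>k\<le>Suc n. real k * (real (Suc n choose k) * p^k * (1-p)^(Suc n-k)))
      = (\<Sum>k\<le>n. real (Suc k) * (real (Suc n choose Suc k) * p^Suc k * (1-p)^(n-k)))"
    by (subst sum.atMost_Suc_shift) simp
  also have "\<dots> = (\<Sum>k\<le>n. (real (Suc n) * p) * (real (n choose k) * p^k * (1-p)^(n-k)))"
  proof (rule sum.cong[OF refl])
    fix k
    have "real (Suc k) * real (Suc n choose Suc k) = real (Suc n) * real (n choose k)"
      using Suc_times_binomial[of k n] by (metis of_nat_mult)
    then show "real (Suc k) * (real (Suc n choose Suc k) * p^Suc k * (1-p)^(n-k))
       = (real (Suc n) * p) * (real (n choose k) * p^k * (1-p)^(n-k))"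
    proof -
      assume h: "real (Suc k) * real (Suc n choose Suc k) = real (Suc n) * real (n choose k)"
      have "real (Suc k) * (real (Suc n choose Suc k) * p^Suc k * (1-p)^(n-k))
          = (real (Suc k) * real (Suc n choose Suc k)) * (p * p^k * (1-p)^(n-k))"
        by (simp only: power_Suc mult_ac)
      also have "\<dots> = (real (Suc n) * p) * (real (n choose k) * p^k * (1-p)^(n-k))"
        by (simp only: h mult_ac)
      finally show ?thesis .
    qed
  qed
  also have "\<dots> = real (Suc n) * p"
    by (simp add: sum_distrib_left[symmetric] S0)
  finally show ?thesis using Suc by simp
qed

lemma S2: "(\<Sum>k\<le>m. real k * (real k - 1) * (real (m choose k) * p^k * (1-p)^(m-k))) = real m * (real m - 1) * (p::real)^2"
proof (cases m)
  case 0 then show ?thesis by simp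
next
  case (Suc n)
  have "(\<Sum>k\<le>Suc n. real k * (real k - 1) * (real (Suc n choose k) * p^k * (1-p)^(Suc n-k)))
      = (\<Sum>k\<le>n. real (Suc k) * real k * (real (Suc n choose Suc k) * p^Suc k * (1-p)^(n-k)))"
    by (subst sum.atMost_Suc_shift) simp
  also have "\<dots> = (\<Sum>k\<le>n. (real (Suc n) * p) * (real k * (real (n choose k) * p^k * (1-p)^(n-k))))"
  proof (rule sum.cong[OF refl])
    fix k
    have "real (Suc k) * real (Suc n choose Suc k) = real (Suc n) * real (n choose k)"
      using Suc_times_binomial[of k n] by (metis of_nat_mult)
    then show "real (Suc k) * real k * (real (Suc n choose Suc k) * p^Suc k * (1-p)^(n-k))
       = (real (Suc n) * p) * (real k * (real (n choose k) * p^k * (1-p)^(n-k)))"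
    proof -
      assume h: "real (Suc k) * real (Suc n choose Suc k) = real (Suc n) * real (n choose k)"
      have "real (Suc k) * real k * (real (Suc n choose Suc k) * p^Suc k * (1-p)^(n-k))
          = (real (Suc k) * real (Suc n choose Suc k)) * (real k * p * p^k * (1-p)^(n-k))"
        by (simp only: power_Suc mult_ac)
      also have "\<dots> = (real (Suc n) * p) * (real k * (real (n choose k) * p^k * (1-p)^(n-k)))"
        by (simp only: h mult_ac)
      finally show ?thesis .
    qed
  qed
  also have "\<dots> = real (Suc n) * p * (real n * p)"
    by (simp add: sum_distrib_left[symmetric] S1)
  finally show ?thesis using Suc by (simp add: power2_eq_square)
qed

lemma Sinv: "(\<Sum>k\<le>m. (real (m choose k) * p^k * (1-p)^(m-k)) / (1 + real k)) * (real (Suc m) * p)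
   = 1 - (1-p)^(Suc m)" for p :: real
proof -
  have "1 = (\<Sum>k\<le>Suc m. real (Suc m choose k) * p^k * (1-p)^(Suc m-k))" by (rule S0[symmetric])
  also have "\<dots> = (1-p)^Suc m + (\<Sum>k\<le>m. real (Suc m choose Suc k) * p^Suc k * (1-p)^(m-k))"
    by (subst sum.atMost_Suc_shift) simp
  also have "(\<Sum>k\<le>m. real (Suc m choose Suc k) * p^Suc k * (1-p)^(m-k))
     = (\<Sum>k\<le>m. (real (m choose k) * p^k * (1-p)^(m-k)) / (1 + real k) * (real (Suc m) * p))"
  proof (rule sum.cong[OF refl])
    fix k
    have "real (Suc k) * real (Suc m choose Suc k) = real (Suc m) * real (m choose k)"
      using Suc_times_binomial[of k m] by (metis of_nat_mult)
    then have e: "real (Suc m choose Suc k) = real (Suc m) * real (m choose k) / (1 + real k)"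
      by (simp add: field_simps)
    show "real (Suc m choose Suc k) * p^Suc k * (1-p)^(m-k)
       = (real (m choose k) * p^k * (1-p)^(m-k)) / (1 + real k) * (real (Suc m) * p)"
      unfolding e by (simp add: field_simps)
  qed
  finally show ?thesis by (simp add: sum_distrib_right)
qed

theorem theorem5:
  shows "\<exists>S_min::real. \<forall>(m::nat) (p::real).
           m > 0 \<longrightarrow> 0 < p \<longrightarrow> p \<le> 1 \<longrightarrow> real m * p \<ge> S_min \<longrightarrow>
           measure_pmf.expectation (binomial_pmf m p) (\<lambda>X. ln (1 + real X))
             \<ge> ln (1 + real m * p) - 11 / 12 * ((1 - p) / (real m * p))"
proof (intro exI[of _ 0] allI impI)
  fix m :: nat and p :: real
  assume m: "m > 0" and p0: "0 < p" and p1: "p \<le> 1" and "real m * p \<ge> 0"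
  define q where "q = 1 - p"
  define mu where "mu = real m * p"
  define c where "c = 1 + mu"
  define w where "w = (\<lambda>k. real (m choose k) * p^k * (1-p)^(m-k))"
  have mu0: "mu > 0" using m p0 by (simp add: mu_def)
  have c0: "c > 0" using mu0 by (simp add: c_def)
  have q0: "q \<ge> 0" using p1 by (simp add: q_def)
  have E: "measure_pmf.expectation (binomial_pmf m p) (\<lambda>X. ln (1 + real X)) = (\<Sum>k\<le>m. w k * ln (1 + real k))"
    using p0 p1 by (subst expectation_binomial_pmf') (auto simp: w_def)
  define A where "A = ln c + 1/(2*c) - mu^2/(8*c^2)"
  define B where "B = 1/(2*c) - (1-2*mu)/(8*c^2)"
  define C where "C = - c/2"
  define D where "D = - 1/(8*c^2)"
  have w0: "w k \<ge> 0" for k using p0 p1 by (simp add: w_def)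
  have pt: "w k * ln (1 + real k) \<ge> w k * (A + B * real k + C / (1 + real k) + D * (real k * (real k - 1)))" for k
  proof -
    define t where "t = (1 + real k) / c"
    have t0: "t > 0" using c0 by (simp add: t_def)
    have "ln (1 + real k) = ln c + ln t"
      using c0 by (simp add: t_def ln_div)
    also have "\<dots> \<ge> ln c + ((t - 1/t)/2 - (t-1)^2/8)" using ln_lb[OF t0] by simp
    finally have "ln (1 + real k) \<ge> ln c + ((t - 1/t)/2 - (t-1)^2/8)" .
    moreover have "ln c + ((t - 1/t)/2 - (t-1)^2/8) = A + B * real k + C / (1 + real k) + D * (real k * (real k - 1))"
    proof -
      have mc: "mu = c - 1" by (simp add: c_def)
      have k0: "1 + real k > 0" by simp
      have gen: "ln c + ((x/c - 1/(x/c))/2 - (x/c-1)^2/8) = (ln c + 1/(2*c) - (c-1)^2/(8*c^2)) + (1/(2*c) - (1-2*(c-1))/(8*c^2)) * (x-1) + (- c/2) / x + (- 1/(8*c^2)) * ((x-1) * ((x-1) - 1))"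
        if "x > 0" for x
        using c0 that by (simp add: field_simps power2_eq_square)
      show ?thesis
        using gen[OF k0] unfolding t_def A_def B_def C_def D_def mc by simp
    qed
    ultimately show ?thesis using w0[of k] by (intro mult_left_mono) auto
  qed
  define Si where "Si = (\<Sum>k\<le>m. w k / (1 + real k))"
  have Si: "Si * (real (Suc m) * p) = 1 - (1-p)^Suc m" using Sinv[of m p] by (simp add: Si_def w_def)
  have Si_le: "Si \<le> 1 / (real (Suc m) * p)"
  proof -
    have "(1-p)^Suc m \<ge> 0" using p1 by simp
    then have "Si * (real (Suc m) * p) \<le> 1" using Si by simp
    moreover have "real (Suc m) * p > 0" using p0 by simp
    ultimately show ?thesis by (simp add: pos_le_divide_eq)
  qed
  have "(\<Sum>k\<le>m. w k * ln (1 + real k)) \<ge> (\<Sum>k\<le>m. w k * (A + B * real k + C / (1 + real k) + D * (real k * (real k - 1))))"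
    by (intro sum_mono pt)
  also have "(\<Sum>k\<le>m. w k * (A + B * real k + C / (1 + real k) + D * (real k * (real k - 1))))
     = A * (\<Sum>k\<le>m. w k) + B * (\<Sum>k\<le>m. real k * w k) + C * Si + D * (\<Sum>k\<le>m. real k * (real k - 1) * w k)"
  proof -
    have "(\<Sum>k\<le>m. w k * (A + B * real k + C / (1 + real k) + D * (real k * (real k - 1))))
      = (\<Sum>k\<le>m. A * w k + B * (real k * w k) + C * (w k / (1 + real k)) + D * (real k * (real k - 1) * w k))"
      by (rule sum.cong) (simp_all add: algebra_simps)
    also have "\<dots> = A * (\<Sum>k\<le>m. w k) + B * (\<Sum>k\<le>m. real k * w k) + C * Si + D * (\<Sum>k\<le>m. real k * (real k - 1) * w k)"
      by (simp only: sum.distrib sum_distrib_left[symmetric] Si_def)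
    finally show ?thesis .
  qed
  also have "\<dots> = A + B * mu + C * Si + D * (real m * (real m - 1) * p^2)"
    using S0[of m p] S1[of m p] S2[of m p] by (simp add: w_def mu_def)
  finally have main: "A + B * mu + C * Si + D * (real m * (real m - 1) * p^2) \<le> (\<Sum>k\<le>m. w k * ln (1 + real k))" .
  have eq1: "A + B * mu + D * (real m * (real m - 1) * p^2) = ln c + 1/2 - mu * q / (8 * c^2)"
  proof -
    have r: "real m * (real m - 1) * p^2 = mu^2 - mu * p" by (simp add: mu_def power2_eq_square algebra_simps)
    have mc: "mu = c - 1" by (simp add: c_def)
    show ?thesis unfolding r A_def B_def D_def q_def mc using c0
      by (simp add: field_simps power2_eq_square)
  qed
  have "C * Si \<ge> C * (1 / (real (Suc m) * p))"
    using mult_left_mono[OF Si_le, of c] c0 by (simp add: C_def)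
  have h2: "1/2 + C * (1 / (real (Suc m) * p)) = - q / (2 * (real (Suc m) * p))"
  proof -
    have N0: "real (Suc m) * p > 0" using p0 by simp
    have cN: "c = real (Suc m) * p + q" by (simp add: c_def mu_def q_def algebra_simps)
    show ?thesis unfolding C_def cN using N0 by (simp add: field_simps)
  qed
  have h3: "q / (2 * (real (Suc m) * p)) \<le> q / (2 * mu)"
  proof (rule divide_left_mono)
    show "0 \<le> q" by (rule q0)
    show "2 * mu \<le> 2 * (real (Suc m) * p)" using p0 by (simp add: mu_def algebra_simps)
    show "0 < 2 * (real (Suc m) * p) * (2 * mu)" using p0 mu0 by simp
  qed
  have h4: "mu * q / (8 * c^2) \<le> q / (8 * mu)"
  proof -
    have "mu * mu \<le> c^2" using mu0 unfolding c_def by (simp add: power2_eq_square field_simps)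
    then have "mu * q * (8 * mu) \<le> q * (8 * c^2)" using mult_left_mono[OF _ q0, of "mu*mu" "c^2"] by (simp add: algebra_simps)
    then show ?thesis using mu0 c0 by (simp add: field_simps)
  qed
  have h5: "q / (2 * mu) + q / (8 * mu) \<le> 11 / 12 * (q / mu)"
    using mu0 q0 by (simp add: field_simps)
  have "ln c - 11 / 12 * (q / mu) \<le> A + B * mu + C * Si + D * (real m * (real m - 1) * p^2)"
    using eq1 \<open>C * Si \<ge> _\<close> h2 h3 h4 h5 by linarith
  with main E show "measure_pmf.expectation (binomial_pmf m p) (\<lambda>X. ln (1 + real X))
             \<ge> ln (1 + real m * p) - 11 / 12 * ((1 - p) / (real m * p))"
    by (simp add: c_def mu_def q_def)
qed

end
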